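(* Let $(X,d)$ be a complete Busemann convex geodesic metric space which is uniformly convex with a modulus of uniform convexity that is monotone or lower semicontinuous from the right. Let $(A,B)$ be a closed convex pair of subsets of $X$ with $B$ bounded, and let $T:A\cup B\to A\cup B$ be a noncyclic relatively nonexpansive mapping. Then there exists $(x,y)\in A\times B$ such that $x=Tx$, $y=Ty$ and $d(x,y)=\operatorname{dist}(A,B)$.
   Context: $\operatorname{dist}(A,B)=\inf\{d(x,y):x\in A,y\in B\}$. A geodesic space is one in which any two points are joined by a geodesic segment; a subset is convex if it contains every geodesic segment joining two of its points. $X$ is Busemann convex if for any geodesics $c_1:[0,l_1]\to X$, $c_2:[0,l_2]\to X$, $d(c_1(tl_1),c_2(tl_2))\le (1-t)d(c_1(0),c_2(0))+t\,d(c_1(l_1),c_2(l_2))$ for all $t\in[0,1]$. $X$ is uniformly convex if for every $r>0$ and $\varepsilon\in(0,2]$ there is $\delta\in(0,1]$ such that for all $a,x,y$ with $d(x,a)\le r$, $d(y,a)\le r$, $d(x,y)\ge\varepsilon r$, every midpoint $m$ of $x,y$ satisfies $d(m,a)\le(1-\delta)r$; a function $\delta(r,\varepsilon)$ providing such $\delta$ is a modulus of uniform convexity; it is monotone if it is decreasing in $r$ for each fixed $\varepsilon$, and lower semicontinuous from the right if it is lower semicontinuous from the right in $r$ for each fixed $\varepsilon$. $T$ is relatively nonexpansive if $d(Tx,Ty)\le d(x,y)$ for all $x\in A$, $y\in B$, and noncyclic if $T(A)\subseteq A$, $T(B)\subseteq B$. *)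

theory Defs
  imports "HOL-Analysis.Analysis"
begin

definition geodesic :: "(real \<Rightarrow> 'a::metric_space) \<Rightarrow> real \<Rightarrow> bool" where
  "geodesic c l \<longleftrightarrow> 0 \<le> l \<and> (\<forall>s\<in>{0..l}. \<forall>t\<in>{0..l}. dist (c s) (c t) = \<bar>s - t\<bar>)"

definition geodesic_between :: "(real \<Rightarrow> 'a::metric_space) \<Rightarrow> real \<Rightarrow> 'a \<Rightarrow> 'a \<Rightarrow> bool" where
  "geodesic_between c l x y \<longleftrightarrow> geodesic c l \<and> c 0 = x \<and> c l = y"

definition geodesic_space :: "'a::metric_space itself \<Rightarrow> bool" where
  "geodesic_space _ \<longleftrightarrow> (\<forall>x y::'a. \<exists>c l. geodesic_between c l x y)"

definition geo_convex :: "'a::metric_space set \<Rightarrow> bool" where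
  "geo_convex S \<longleftrightarrow> (\<forall>x\<in>S. \<forall>y\<in>S. \<forall>c l. geodesic_between c l x y \<longrightarrow> c ` {0..l} \<subseteq> S)"

definition busemann_convex :: "'a::metric_space itself \<Rightarrow> bool" where
  "busemann_convex _ \<longleftrightarrow>
     (\<forall>(c1::real \<Rightarrow> 'a) l1 (c2::real \<Rightarrow> 'a) l2. geodesic c1 l1 \<longrightarrow> geodesic c2 l2 \<longrightarrow>
        (\<forall>t\<in>{0..1}. dist (c1 (t * l1)) (c2 (t * l2))
            \<le> (1 - t) * dist (c1 0) (c2 0) + t * dist (c1 l1) (c2 l2)))"

definition is_midpoint :: "'a::metric_space \<Rightarrow> 'a \<Rightarrow> 'a \<Rightarrow> bool" where
  "is_midpoint m x y \<longleftrightarrow> dist x m = dist x y / 2 \<and> dist m y = dist x y / 2"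

definition modulus_uc :: "'a::metric_space itself \<Rightarrow> (real \<Rightarrow> real \<Rightarrow> real) \<Rightarrow> bool" where
  "modulus_uc _ \<delta> \<longleftrightarrow>
     (\<forall>r>0. \<forall>\<epsilon>\<in>{0<..2}. 0 < \<delta> r \<epsilon> \<and> \<delta> r \<epsilon> \<le> 1 \<and>
        (\<forall>a x y m :: 'a. dist x a \<le> r \<longrightarrow> dist y a \<le> r \<longrightarrow> dist x y \<ge> \<epsilon> * r \<longrightarrow>
            is_midpoint m x y \<longrightarrow> dist m a \<le> (1 - \<delta> r \<epsilon>) * r))"

definition monotone_modulus :: "(real \<Rightarrow> real \<Rightarrow> real) \<Rightarrow> bool" where
  "monotone_modulus \<delta> \<longleftrightarrow> (\<forall>\<epsilon>\<in>{0<..2}. \<forall>r s. 0 < r \<longrightarrow> r \<le> s \<longrightarrow> \<delta> s \<epsilon> \<le> \<delta> r \<epsilon>)"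

definition lsc_right_modulus :: "(real \<Rightarrow> real \<Rightarrow> real) \<Rightarrow> bool" where
  "lsc_right_modulus \<delta> \<longleftrightarrow> (\<forall>\<epsilon>\<in>{0<..2}. \<forall>r>0. \<forall>e>0. \<exists>\<eta>>0.
       \<forall>s. r \<le> s \<longrightarrow> s < r + \<eta> \<longrightarrow> \<delta> r \<epsilon> - e < \<delta> s \<epsilon>)"

definition relatively_nonexpansive :: "('a::metric_space \<Rightarrow> 'a) \<Rightarrow> 'a set \<Rightarrow> 'a set \<Rightarrow> bool" where
  "relatively_nonexpansive T A B \<longleftrightarrow> (\<forall>x\<in>A. \<forall>y\<in>B. dist (T x) (T y) \<le> dist x y)"

definition noncyclic :: "('a \<Rightarrow> 'a) \<Rightarrow> 'a set \<Rightarrow> 'a set \<Rightarrow> bool" where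
  "noncyclic T A B \<longleftrightarrow> T ` A \<subseteq> A \<and> T ` B \<subseteq> B"

end

theory Submission
  imports Defs
begin

lemma geodesic_between_const: "geodesic_between (\<lambda>_. a) 0 a a"
  by (simp add: geodesic_between_def geodesic_def)

lemma geodesic_distI:
  assumes "geodesic_between c l x y" "s \<in> {0..l}" "t \<in> {0..l}"
  shows "dist (c s) (c t) = \<bar>s - t\<bar>"
  using assms unfolding geodesic_between_def geodesic_def by blast

lemma geodesic_nonneg: "geodesic_between c l x y \<Longrightarrow> 0 \<le> l"
  unfolding geodesic_between_def geodesic_def by blast

lemma geodesic_ends: "geodesic_between c l x y \<Longrightarrow> c 0 = x \<and> c l = y"
  unfolding geodesic_between_def by blast

lemma geodesic_point:
  assumes "geodesic_between c l x y" "s \<in> {0..l}"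
  shows "\<exists>t\<in>{0..1}. c s = c (t*l)"
proof (cases "l = 0")
  case True then have "s = 0" using assms(2) by simp
  then show ?thesis using True by (intro bexI[of _ 0]) auto
next
  case False
  then have "l > 0" using geodesic_nonneg[OF assms(1)] by simp
  then show ?thesis using assms(2) by (intro bexI[of _ "s/l"]) (auto simp: field_simps)
qed

lemma busemann_apply:
  assumes "busemann_convex TYPE('a::metric_space)"
    "geodesic_between (c::real\<Rightarrow>'a) l x y" "geodesic_between c' l' x' y'" "t \<in> {0..1}"
  shows "dist (c (t*l)) (c' (t*l')) \<le> (1-t) * dist x x' + t * dist y y'"
proof -
  have "geodesic c l" "geodesic c' l'" using assms(2,3) unfolding geodesic_between_def by auto
  then have "dist (c (t*l)) (c' (t*l')) \<le> (1-t) * dist (c 0) (c' 0) + t * dist (c l) (c' l')"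
    using assms(1,4) unfolding busemann_convex_def by blast
  then show ?thesis using geodesic_ends[OF assms(2)] geodesic_ends[OF assms(3)] by simp
qed

lemma busemann_point:
  assumes "busemann_convex TYPE('a::metric_space)"
    "geodesic_between (c::real\<Rightarrow>'a) l x y" "s \<in> {0..l}"
  shows "dist (c s) a \<le> max (dist x a) (dist y a)"
proof -
  obtain t where t: "t \<in> {0..1}" "c s = c (t*l)" using geodesic_point[OF assms(2,3)] by blast
  have "dist (c (t*l)) ((\<lambda>_. a) (t*0)) \<le> (1-t) * dist x a + t * dist y a"
    using busemann_apply[OF assms(1,2) geodesic_between_const t(1)] .
  also have "\<dots> \<le> (1-t) * max (dist x a) (dist y a) + t * max (dist x a) (dist y a)"
    using t(1) by (intro add_mono mult_left_mono) auto
  finally show ?thesis using t(2) by (simp add: algebra_simps)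
qed

lemma midpoint_exists:
  assumes "geodesic_space TYPE('a::metric_space)" "geo_convex K" "x \<in> K" "y \<in> K"
  shows "\<exists>m\<in>K. is_midpoint m (x::'a) y"
proof -
  obtain c l where g: "geodesic_between c l x y" using assms(1) unfolding geodesic_space_def by blast
  have l0: "0 \<le> l" using geodesic_nonneg[OF g] .
  have "c (l/2) \<in> c ` {0..l}" using l0 by auto
  then have "c (l/2) \<in> K" using assms(2-4) g unfolding geo_convex_def by blast
  moreover have "dist (c 0) (c (l/2)) = l/2" "dist (c (l/2)) (c l) = l/2" "dist (c 0) (c l) = l"
    using geodesic_distI[OF g] l0 by auto
  ultimately show ?thesis using geodesic_ends[OF g] unfolding is_midpoint_def by auto
qed

definition qconv :: "'a::metric_space set \<Rightarrow> ('a \<Rightarrow> real) \<Rightarrow> bool" where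
 "qconv K f \<longleftrightarrow> (\<forall>x\<in>K. \<forall>y\<in>K. \<forall>c l. geodesic_between c l x y \<longrightarrow> (\<forall>s\<in>{0..l}. f (c s) \<le> max (f x) (f y)))"

lemma qconv_sublevel: "geo_convex K \<Longrightarrow> qconv K f \<Longrightarrow> geo_convex {x\<in>K. f x \<le> r}"
  unfolding geo_convex_def qconv_def
  by (smt (verit, ccfv_threshold) image_subset_iff mem_Collect_eq)

lemma lip_cont:
  assumes "\<And>x y. \<bar>f x - f y\<bar> \<le> dist x y"
  shows "continuous_on S (f :: 'a::metric_space \<Rightarrow> real)"
  unfolding continuous_on_iff
proof (intro ballI allI impI)
  fix x e assume "x \<in> S" "(0::real) < e"
  then show "\<exists>d>0. \<forall>x'\<in>S. dist x' x < d \<longrightarrow> dist (f x') (f x) < e"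
    using assms by (intro exI[of _ e]) (auto simp: dist_real_def intro: le_less_trans)
qed

lemma uc_key:
  assumes U: "modulus_uc TYPE('a::metric_space) \<delta>" and M: "monotone_modulus \<delta> \<or> lsc_right_modulus \<delta>"
    and rho: "\<rho> > 0" and eps: "\<epsilon> > 0"
  shows "\<exists>\<eta>>0. \<forall>a x y m :: 'a. dist x a \<le> \<rho> + \<eta> \<longrightarrow> dist y a \<le> \<rho> + \<eta> \<longrightarrow> is_midpoint m x y
            \<longrightarrow> dist m a \<ge> \<rho> - \<eta> \<longrightarrow> dist x y < \<epsilon>"
proof -
  define e' where "e' = min 2 (\<epsilon>/(\<rho>+1))"
  have e': "e' \<in> {0<..2}" using rho eps unfolding e'_def by auto
  have "\<exists>d0>0. \<exists>h0>0. \<forall>s. \<rho> \<le> s \<longrightarrow> s < \<rho> + h0 \<longrightarrow> d0 \<le> \<delta> s e'"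
  proof (cases "monotone_modulus \<delta>")
    case True
    have "0 < \<delta> (\<rho>+1) e'" using U e' rho unfolding modulus_uc_def by auto
    moreover have "\<forall>s. \<rho> \<le> s \<longrightarrow> s < \<rho> + 1 \<longrightarrow> \<delta> (\<rho>+1) e' \<le> \<delta> s e'"
      using True e' rho unfolding monotone_modulus_def by auto
    ultimately show ?thesis by (intro exI[of _ "\<delta> (\<rho>+1) e'"] conjI exI[of _ 1]) auto
  next
    case False
    then have L: "lsc_right_modulus \<delta>" using M by auto
    have p: "0 < \<delta> \<rho> e'" using U e' rho unfolding modulus_uc_def by auto
    then obtain h where h: "h > 0" "\<forall>s. \<rho> \<le> s \<longrightarrow> s < \<rho> + h \<longrightarrow> \<delta> \<rho> e' - \<delta> \<rho> e'/2 < \<delta> s e'"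
      using L e' rho unfolding lsc_right_modulus_def
      by (meson half_gt_zero)
    show ?thesis using h p by (intro exI[of _ "\<delta> \<rho> e'/2"] exI[of _ h]) force
  qed
  then obtain d0 h0 where d0: "d0 > 0" "h0 > 0" "\<forall>s. \<rho> \<le> s \<longrightarrow> s < \<rho> + h0 \<longrightarrow> d0 \<le> \<delta> s e'"
    by blast
  define \<eta> where "\<eta> = min (h0/2) (min 1 (d0*\<rho>/4))"
  have eta: "\<eta> > 0" "\<eta> < h0" "\<eta> \<le> 1" "\<eta> \<le> d0*\<rho>/4"
    using d0 rho unfolding \<eta>_def by auto
  show ?thesis
  proof (intro exI[of _ \<eta>] conjI allI impI)
    show "\<eta> > 0" by (rule eta)
    fix a x y m :: 'a
    assume xa: "dist x a \<le> \<rho> + \<eta>" and ya: "dist y a \<le> \<rho> + \<eta>" and mid: "is_midpoint m x y"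
      and ma: "dist m a \<ge> \<rho> - \<eta>"
    show "dist x y < \<epsilon>"
    proof (rule ccontr)
      assume "\<not> dist x y < \<epsilon>"
      then have xy: "dist x y \<ge> \<epsilon>" by simp
      define s where "s = \<rho> + \<eta>"
      have s: "s > 0" "\<rho> \<le> s" "s < \<rho> + h0" "s \<le> \<rho> + 1" using eta rho unfolding s_def by auto
      have "e' * s \<le> (\<epsilon>/(\<rho>+1)) * (\<rho>+1)"
        using s e' unfolding e'_def by (intro mult_mono) auto
      also have "\<dots> = \<epsilon>" using rho by simp
      finally have "e' * s \<le> dist x y" using xy by simp
      then have "dist m a \<le> (1 - \<delta> s e') * s"
        using U s e' xa ya mid unfolding modulus_uc_def s_def by blast
      also have "\<dots> \<le> (1 - d0) * s"
        using d0(3) s by (intro mult_right_mono) auto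
      finally have "dist m a \<le> (1 - d0) * s" .
      moreover have "(1 - d0) * s < \<rho> - \<eta>"
      proof -
        have "(1 - d0) * s = \<rho> + \<eta> - d0*\<rho> - d0*\<eta>" unfolding s_def by (simp add: algebra_simps)
        moreover have "d0*\<eta> \<ge> 0" using d0 eta by simp
        moreover have "d0*\<rho> > 0" using d0 rho by simp
        ultimately show ?thesis using eta(4) by linarith
      qed
      ultimately show False using ma by linarith
    qed
  qed
qed

lemma inv_suc_mono: "m \<le> n \<Longrightarrow> inverse (real (Suc n)) \<le> inverse (real (Suc m))"
  by (simp add: le_imp_inverse_le)

lemma nested_nonempty:
  fixes K :: "nat \<Rightarrow> 'a::complete_space set"
  assumes G: "geodesic_space TYPE('a)" and U: "modulus_uc TYPE('a) \<delta>"
    and M: "monotone_modulus \<delta> \<or> lsc_right_modulus \<delta>"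
    and ne: "\<And>n. K n \<noteq> {}" and cl: "\<And>n. closed (K n)" and cv: "\<And>n. geo_convex (K n)"
    and dec: "\<And>n. K (Suc n) \<subseteq> K n" and bd: "bounded (K 0)"
  shows "(\<Inter>n. K n) \<noteq> {}"
proof -
  have mono: "m \<le> n \<Longrightarrow> K n \<subseteq> K m" for m n
    using lift_Suc_antimono_le[of K, OF dec] by blast
  obtain a where a: "a \<in> K 0" using ne by blast
  define r where "r n = setdist {a} (K n)" for n
  have rinc: "m \<le> n \<Longrightarrow> r m \<le> r n" for m n
    unfolding r_def using mono ne by (intro setdist_subset_right) auto
  obtain E where E: "\<forall>y\<in>K 0. dist a y \<le> E" using bd bounded_any_center by blast
  have rle: "r n \<le> E" for n
  proof -
    obtain y where "y \<in> K n" using ne by blast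
    then have "r n \<le> dist a y" "y \<in> K 0" unfolding r_def using setdist_le_dist[of a "{a}" y] mono[of 0 n] by auto
    then show ?thesis using E by force
  qed
  have bdd: "bdd_above (range r)" using rle by (intro bdd_aboveI[of _ E]) auto
  define \<rho> where "\<rho> = Sup (range r)"
  have rup: "r n \<le> \<rho>" for n unfolding \<rho>_def using bdd by (simp add: cSUP_upper)
  have rapp: "\<exists>N. \<rho> - e < r N" if "e > 0" for e
  proof -
    have "\<rho> - e < Sup (range r)" using that \<rho>_def by simp
    then show ?thesis using less_cSUP_iff[of "range r"] bdd by (auto simp: less_cSUP_iff)
  qed
  have rho0: "\<rho> \<ge> 0" using rup[of 0] unfolding r_def by (meson order_trans setdist_pos_le)
  have "\<exists>p. p \<in> K n \<and> dist a p < r n + inverse (real (Suc n))" for n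
  proof -
    have "setdist {a} (K n) < r n + inverse (real (Suc n))" unfolding r_def by simp
    then obtain x y where "x \<in> {a}" "y \<in> K n" "dist x y < r n + inverse (real (Suc n))"
      using setdist_ltE ne by (metis insert_not_empty)
    then show ?thesis by auto
  qed
  then obtain p where p: "\<And>n. p n \<in> K n" "\<And>n. dist a (p n) < r n + inverse (real (Suc n))"
    by metis
  have pb: "dist (p n) a < \<rho> + inverse (real (Suc n))" for n
    using p(2)[of n] rup[of n] by (simp add: dist_commute)
  have "Cauchy p"
  proof (rule metric_CauchyI)
    fix e :: real assume e: "e > 0"
    show "\<exists>M. \<forall>m\<ge>M. \<forall>n\<ge>M. dist (p m) (p n) < e"
    proof (cases "\<rho> = 0")
      case True
      obtain M where M: "inverse (real (Suc M)) < e/2" using reals_Archimedean[of "e/2"] e by auto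
      show ?thesis
      proof (intro exI[of _ M] allI impI)
        fix m n assume mn: "M \<le> m" "M \<le> n"
        have "dist (p m) (p n) \<le> dist a (p m) + dist a (p n)" by (rule dist_triangle3)
        also have "\<dots> = dist (p m) a + dist (p n) a" by (simp only: dist_commute)
        also have "\<dots> < inverse (real (Suc m)) + inverse (real (Suc n))"
          using pb[of m] pb[of n] True by simp
        also have "\<dots> \<le> inverse (real (Suc M)) + inverse (real (Suc M))"
          using mn by (intro add_mono inv_suc_mono) auto
        finally show "dist (p m) (p n) < e" using M by simp
      qed
    next
      case False
      then have rp: "\<rho> > 0" using rho0 by simp
      obtain \<eta> where eta: "\<eta> > 0" and H: "\<forall>a x y m :: 'a. dist x a \<le> \<rho> + \<eta> \<longrightarrow> dist y a \<le> \<rho> + \<eta> \<longrightarrow> is_midpoint m x y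
            \<longrightarrow> dist m a \<ge> \<rho> - \<eta> \<longrightarrow> dist x y < e"
        using uc_key[OF U M rp e] by blast
      obtain N1 where N1: "\<rho> - \<eta> < r N1" using rapp eta by blast
      obtain M0 where M0: "inverse (real (Suc M0)) < \<eta>" using reals_Archimedean eta by blast
      define M where "M = max N1 M0"
      show ?thesis
      proof (intro exI[of _ M] allI impI)
        fix m n assume mn: "M \<le> m" "M \<le> n"
        have "p m \<in> K M" "p n \<in> K M" using p(1) mono mn by blast+
        then obtain q where q: "q \<in> K M" "is_midpoint q (p m) (p n)"
          using midpoint_exists[OF G cv] by blast
        have "q \<in> K N1" using q(1) mono[of N1 M] unfolding M_def by auto
        then have "r N1 \<le> dist a q" unfolding r_def by (simp add: setdist_le_dist)
        then have qa: "dist q a \<ge> \<rho> - \<eta>" using N1 by (simp add: dist_commute)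
        have "inverse (real (Suc m)) \<le> inverse (real (Suc M0))" "inverse (real (Suc n)) \<le> inverse (real (Suc M0))"
          using mn unfolding M_def by (auto intro: inv_suc_mono)
        then have "dist (p m) a \<le> \<rho> + \<eta>" "dist (p n) a \<le> \<rho> + \<eta>"
          using pb[of m] pb[of n] M0 by linarith+
        then show "dist (p m) (p n) < e" using H q(2) qa by blast
      qed
    qed
  qed
  then obtain L where L: "p \<longlonglongrightarrow> L" using Cauchy_convergent_iff convergent_def by blast
  have "L \<in> K n" for n
  proof -
    have A: "(\<lambda>k. p (k + n)) \<longlonglongrightarrow> L" using L by (rule LIMSEQ_ignore_initial_segment)
    have B: "p (k + n) \<in> K n" for k using p(1) mono[of n "k+n"] by auto
    show ?thesis by (rule closed_sequentially[OF cl[of n] B A])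
  qed
  then show ?thesis by blast
qed

lemma min_exists:
  fixes K :: "'a::complete_space set" and f :: "'a \<Rightarrow> real"
  assumes G: "geodesic_space TYPE('a)" and U: "modulus_uc TYPE('a) \<delta>"
    and M: "monotone_modulus \<delta> \<or> lsc_right_modulus \<delta>"
    and ne: "K \<noteq> {}" and cl: "closed K" and cv: "geo_convex K" and bd: "bounded K"
    and cont: "continuous_on K f" and qc: "qconv K f" and lb: "\<And>x. x\<in>K \<Longrightarrow> f x \<ge> b"
  shows "\<exists>x\<in>K. \<forall>y\<in>K. f x \<le> f y"
proof -
  define m where "m = Inf (f ` K)"
  have bb: "bdd_below (f ` K)" using lb by (intro bdd_belowI[of _ b]) auto
  define Kn where "Kn n = {x\<in>K. f x \<le> m + inverse (real (Suc n))}" for n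
  have "(\<Inter>n. Kn n) \<noteq> {}"
  proof (rule nested_nonempty[OF G U M])
    fix n
    have lt: "Inf (f ` K) < m + inverse (real (Suc n))" unfolding m_def by simp
    have fne: "f ` K \<noteq> {}" using ne by simp
    obtain z where z: "z \<in> f ` K" "z < m + inverse (real (Suc n))"
      using cInf_lessD[OF fne lt] by blast
    then obtain w where w: "w \<in> K" "f w < m + inverse (real (Suc n))" by blast
    have "w \<in> Kn n" unfolding Kn_def using w by simp
    then show "Kn n \<noteq> {}" by blast
    show "closed (Kn n)" unfolding Kn_def
      by (rule continuous_on_closed_Collect_le[OF cont continuous_on_const cl])
    show "geo_convex (Kn n)" unfolding Kn_def by (rule qconv_sublevel[OF cv qc])
    have i: "inverse (real (Suc (Suc n))) \<le> inverse (real (Suc n))" by (rule inv_suc_mono) simp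
    have h: "\<forall>x. f x \<le> m + inverse (real (Suc (Suc n))) \<longrightarrow> f x \<le> m + inverse (real (Suc n))"
    proof (intro allI impI)
      fix x assume "f x \<le> m + inverse (real (Suc (Suc n)))"
      then show "f x \<le> m + inverse (real (Suc n))" using i by linarith
    qed
    show "Kn (Suc n) \<subseteq> Kn n" unfolding Kn_def using h by blast
  next
    show "bounded (Kn 0)" unfolding Kn_def by (rule bounded_subset[OF bd]) auto
  qed
  then obtain x where x: "\<And>n. x \<in> Kn n" by blast
  have xK: "x \<in> K" using x[of 0] unfolding Kn_def by auto
  have "f x \<le> m"
  proof (rule ccontr)
    assume "\<not> f x \<le> m"
    then have "f x - m > 0" by simp
    then obtain n where "inverse (real (Suc n)) < f x - m" using reals_Archimedean by blast
    moreover have "f x \<le> m + inverse (real (Suc n))" using x[of n] unfolding Kn_def by simp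
    ultimately show False by linarith
  qed
  moreover have "m \<le> f y" if "y \<in> K" for y unfolding m_def using bb that by (simp add: cInf_lower)
  ultimately have "\<forall>y\<in>K. f x \<le> f y" by fastforce
  then show ?thesis using xK by blast
qed

lemma conv_le:
  fixes t u v w :: real
  assumes t: "t \<in> {0..1}" and uv: "u \<le> w" "v \<le> w"
  shows "(1-t)*u + t * v \<le> w"
proof -
  have "(1-t)*u \<le> (1-t)*w" using t uv by (intro mult_left_mono) auto
  moreover have "t * v \<le> t*w" using t uv by (intro mult_left_mono) auto
  ultimately have "(1-t)*u + t * v \<le> (1-t)*w + t*w" by linarith
  then show ?thesis by (simp add: algebra_simps)
qed

lemma setdist_qconv:
  fixes A B :: "'a::metric_space set"
  assumes G: "geodesic_space TYPE('a)" and Bu: "busemann_convex TYPE('a)"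
    and Ane: "A \<noteq> {}" and Acv: "geo_convex A"
  shows "qconv B (\<lambda>y. setdist {y} A)"
  unfolding qconv_def
proof (intro ballI allI impI)
  fix y1 y2 c l s assume y: "y1 \<in> B" "y2 \<in> B" and g: "geodesic_between c l y1 y2" and s: "s \<in> {0..l}"
  define M where "M = max (setdist {y1} A) (setdist {y2} A)"
  show "setdist {c s} A \<le> max (setdist {y1} A) (setdist {y2} A)"
    unfolding M_def[symmetric]
  proof (rule field_le_epsilon)
    fix e :: real assume e: "0 < e"
    have "setdist {y1} A < setdist {y1} A + e" using e by simp
    then obtain u1 a1 where "u1 \<in> {y1}" "a1 \<in> A" "dist u1 a1 < setdist {y1} A + e"
      using setdist_ltE[of "{y1}" A] Ane by blast
    then have a1: "a1 \<in> A" "dist y1 a1 \<le> M + e" unfolding M_def by auto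
    have "setdist {y2} A < setdist {y2} A + e" using e by simp
    then obtain u2 a2 where "u2 \<in> {y2}" "a2 \<in> A" "dist u2 a2 < setdist {y2} A + e"
      using setdist_ltE[of "{y2}" A] Ane by blast
    then have a2: "a2 \<in> A" "dist y2 a2 \<le> M + e" unfolding M_def by auto
    obtain c' l' where g': "geodesic_between c' l' a1 a2" using G unfolding geodesic_space_def by blast
    obtain t where t: "t \<in> {0..1}" "c s = c (t*l)" using geodesic_point[OF g s] by blast
    have l'0: "0 \<le> l'" using geodesic_nonneg[OF g'] .
    have "t*l' \<in> {0..l'}" using t(1) l'0 by (auto simp: mult_le_cancel_right1 mult_left_le_one_le)
    then have inA: "c' (t*l') \<in> A" using Acv a1(1) a2(1) g' unfolding geo_convex_def by blast
    have "setdist {c s} A \<le> dist (c s) (c' (t*l'))" using inA by (simp add: setdist_le_dist)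
    also have "\<dots> \<le> (1-t) * dist y1 a1 + t * dist y2 a2"
      using busemann_apply[OF Bu g g' t(1)] t(2) by simp
    also have "\<dots> \<le> M + e" using conv_le[OF t(1) a1(2) a2(2)] .
    finally show "setdist {c s} A \<le> M + e" .
  qed
qed

lemma geo_convex_Int: "geo_convex S \<Longrightarrow> geo_convex T \<Longrightarrow> geo_convex (S \<inter> T)"
  unfolding geo_convex_def by blast

lemma cball_convex:
  assumes Bu: "busemann_convex TYPE('a::metric_space)"
  shows "geo_convex (cball (y::'a) R)"
  unfolding geo_convex_def
proof (intro ballI allI impI subsetI)
  fix x1 x2 c l z assume x: "x1 \<in> cball y R" "x2 \<in> cball y R" and g: "geodesic_between c l x1 x2"
    and z: "z \<in> c ` {0..l}"
  then obtain s where s: "s \<in> {0..l}" "z = c s" by blast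
  have "dist (c s) y \<le> max (dist x1 y) (dist x2 y)" by (rule busemann_point[OF Bu g s(1)])
  then show "z \<in> cball y R" using x s(2) by (auto simp: dist_commute)
qed

lemma nearest_exists:
  fixes A :: "'a::complete_space set"
  assumes G: "geodesic_space TYPE('a)" and Bu: "busemann_convex TYPE('a)" and U: "modulus_uc TYPE('a) \<delta>"
    and M: "monotone_modulus \<delta> \<or> lsc_right_modulus \<delta>"
    and ne: "A \<noteq> {}" and cl: "closed A" and cv: "geo_convex A"
  shows "\<exists>x\<in>A. \<forall>a\<in>A. dist x y \<le> dist a y"
proof -
  define R where "R = setdist {y} A + 1"
  have "setdist {y} A < R" unfolding R_def by simp
  then obtain u a0 where "u \<in> {y}" "a0 \<in> A" "dist u a0 < R" using setdist_ltE[of "{y}" A] ne by blast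
  then have a0: "a0 \<in> A \<inter> cball y R" by auto
  have "\<exists>x\<in>A \<inter> cball y R. \<forall>z\<in>A \<inter> cball y R. dist x y \<le> dist z y"
  proof (rule min_exists[OF G U M])
    show "A \<inter> cball y R \<noteq> {}" using a0 by blast
    show "closed (A \<inter> cball y R)" using cl by blast
    show "geo_convex (A \<inter> cball y R)" by (rule geo_convex_Int[OF cv cball_convex[OF Bu]])
    show "bounded (A \<inter> cball y R)" by blast
    show "continuous_on (A \<inter> cball y R) (\<lambda>x. dist x y)"
      by (rule lip_cont) (metis abs_dist_diff_le dist_commute)
    show "qconv (A \<inter> cball y R) (\<lambda>x. dist x y)"
      unfolding qconv_def using busemann_point[OF Bu] by blast
    show "\<And>x. x \<in> A \<inter> cball y R \<Longrightarrow> 0 \<le> dist x y" by simp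
  qed
  then obtain x where x: "x \<in> A" "x \<in> cball y R" "\<forall>z\<in>A \<inter> cball y R. dist x y \<le> dist z y" by blast
  have "dist x y \<le> dist a y" if a: "a \<in> A" for a
  proof (cases "a \<in> cball y R")
    case True then show ?thesis using x(3) a by blast
  next
    case False
    then show ?thesis using x(2) by (simp add: dist_commute)
  qed
  then show ?thesis using x(1) by blast
qed

lemma nearest_unique:
  fixes A :: "'a::metric_space set"
  assumes G: "geodesic_space TYPE('a)" and U: "modulus_uc TYPE('a) \<delta>"
    and cv: "geo_convex A"
    and x1: "x1 \<in> A" and x2: "x2 \<in> A" and mn: "\<forall>a\<in>A. d \<le> dist a y"
    and d1: "dist x1 y \<le> d" and d2: "dist x2 y \<le> d"
  shows "x1 = x2"
proof (rule ccontr)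
  assume ne: "x1 \<noteq> x2"
  obtain q where q: "q \<in> A" "is_midpoint q x1 x2" using midpoint_exists[OF G cv x1 x2] by blast
  have dq: "d \<le> dist q y" using mn q(1) by blast
  have dpos: "d > 0"
  proof (rule ccontr)
    assume "\<not> d > 0"
    then have "dist x1 y = 0" "dist x2 y = 0" using d1 d2 zero_le_dist[of x1 y] zero_le_dist[of x2 y] by linarith+
    then show False using ne by simp
  qed
  define eps where "eps = dist x1 x2 / d"
  have "dist x1 x2 \<le> dist x1 y + dist x2 y" using dist_triangle[of x1 x2 y] by (simp add: dist_commute)
  then have "dist x1 x2 \<le> 2*d" using d1 d2 by linarith
  then have eps: "eps \<in> {0<..2}" unfolding eps_def using dpos ne by (auto simp: field_simps)
  have "eps * d \<le> dist x1 x2" unfolding eps_def using dpos by simp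
  then have "dist q y \<le> (1 - \<delta> d eps) * d" and dp: "0 < \<delta> d eps"
    using U dpos eps d1 d2 q(2) unfolding modulus_uc_def by blast+
  moreover have "(1 - \<delta> d eps) * d < d" using dp dpos by (simp add: algebra_simps)
  ultimately show False using dq by linarith
qed

lemma asym_fixed:
  fixes A B K :: "'a::complete_space set" and T :: "'a \<Rightarrow> 'a"
  assumes G: "geodesic_space TYPE('a)" and Bu: "busemann_convex TYPE('a)" and U: "modulus_uc TYPE('a) \<delta>"
    and M: "monotone_modulus \<delta> \<or> lsc_right_modulus \<delta>"
    and Kne: "K \<noteq> {}" and Kcl: "closed K" and Kcv: "geo_convex K" and Kbd: "bounded K"
    and TK: "\<forall>z\<in>K. T z \<in> K" and KB: "K \<subseteq> B" and Bbd: "bounded B"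
    and Ane: "A \<noteq> {}" and TA: "\<forall>x\<in>A. T x \<in> A" and TB: "\<forall>z\<in>B. T z \<in> B"
    and RN: "relatively_nonexpansive T A B"
  shows "\<exists>y\<in>K. T y = y"
proof -
  obtain x0 where x0: "x0 \<in> A" using Ane by blast
  obtain b0 where b0: "b0 \<in> K" using Kne by blast
  have b0B: "b0 \<in> B" using b0 KB by blast
  define xs where "xs n = (T ^^ n) x0" for n
  have xsS: "xs (Suc n) = T (xs n)" for n unfolding xs_def by simp
  have xsA: "xs n \<in> A" for n
  proof (induction n)
    case 0 then show ?case using x0 by (simp add: xs_def)
  next
    case (Suc n) then show ?case using TA xsS by simp
  qed
  have orbB: "(T ^^ n) b0 \<in> B" for n
  proof (induction n)
    case 0 then show ?case using b0B by simp
  next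
    case (Suc n) then show ?case using TB by simp
  qed
  have close: "dist (xs n) ((T ^^ n) b0) \<le> dist x0 b0" for n
  proof (induction n)
    case 0 then show ?case by (simp add: xs_def)
  next
    case (Suc n)
    have "dist (xs (Suc n)) ((T ^^ Suc n) b0) = dist (T (xs n)) (T ((T ^^ n) b0))" using xsS by simp
    also have "\<dots> \<le> dist (xs n) ((T ^^ n) b0)"
      using RN xsA orbB unfolding relatively_nonexpansive_def by blast
    finally show ?case using Suc by simp
  qed
  obtain E where E: "\<forall>y\<in>B. dist b0 y \<le> E" using Bbd bounded_any_center by blast
  have xsb: "dist b0 (xs n) \<le> E + dist x0 b0" for n
  proof -
    have "dist b0 (xs n) \<le> dist b0 ((T ^^ n) b0) + dist ((T ^^ n) b0) (xs n)" by (rule dist_triangle)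
    also have "\<dots> \<le> E + dist x0 b0"
    proof -
      have "dist b0 ((T ^^ n) b0) \<le> E" using E orbB[of n] by blast
      moreover have "dist ((T ^^ n) b0) (xs n) \<le> dist x0 b0" using close[of n] by (simp add: dist_commute)
      ultimately show ?thesis by linarith
    qed
    finally show ?thesis .
  qed
  define S where "S z = {r. eventually (\<lambda>n. dist z (xs n) \<le> r) sequentially}" for z
  define F where "F z = Inf (S z)" for z
  have Sne: "dist z b0 + (E + dist x0 b0) \<in> S z" for z
  proof -
    have "dist z (xs n) \<le> dist z b0 + (E + dist x0 b0)" for n
      using dist_triangle[of z "xs n" b0] xsb[of n] by linarith
    then show ?thesis unfolding S_def by simp
  qed
  have Spos: "0 \<le> r" if rS: "r \<in> S z" for r z
  proof -
    obtain N where "\<forall>n\<ge>N. dist z (xs n) \<le> r" using rS unfolding S_def eventually_sequentially by blast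
    then have "dist z (xs N) \<le> r" by blast
    then show ?thesis using zero_le_dist[of z "xs N"] by linarith
  qed
  have Sbdd: "bdd_below (S z)" for z using Spos by (intro bdd_belowI[of _ 0]) blast
  have F1: "F z \<le> r" if "r \<in> S z" for r z unfolding F_def using Sbdd that by (rule cInf_lower[rotated])
  have F2: "r \<in> S z" if Fr: "F z < r" for r z
  proof -
    have ne: "S z \<noteq> {}" using Sne by blast
    obtain s where s: "s \<in> S z" "s < r" using cInf_lessD[OF ne] Fr unfolding F_def by blast
    then show ?thesis unfolding S_def by (auto elim: eventually_mono)
  qed
  have F0: "0 \<le> F z" for z
  proof -
    have ne: "S z \<noteq> {}" using Sne by blast
    show ?thesis unfolding F_def by (rule cInf_greatest[OF ne]) (rule Spos)
  qed
  have Fup: "F z \<le> F w + dist z w" for z w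
  proof -
    have "F z - dist z w \<le> F w"
    proof (rule field_le_epsilon)
      fix e :: real assume e: "0 < e"
      have "F w + e \<in> S w" using e by (intro F2) simp
      then have "eventually (\<lambda>n. dist w (xs n) \<le> F w + e) sequentially" unfolding S_def by simp
      then have "eventually (\<lambda>n. dist z (xs n) \<le> F w + e + dist z w) sequentially"
      proof (rule eventually_mono)
        fix n assume "dist w (xs n) \<le> F w + e"
        then show "dist z (xs n) \<le> F w + e + dist z w"
          using dist_triangle[of z "xs n" w] by linarith
      qed
      then have "F z \<le> F w + e + dist z w" using F1 unfolding S_def by blast
      then show "F z - dist z w \<le> F w + e" by linarith
    qed
    then show ?thesis by linarith
  qed
  have Flip: "\<bar>F z - F w\<bar> \<le> dist z w" for z w
    using Fup[of z w] Fup[of w z] by (simp add: dist_commute abs_le_iff)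
  have Fqc: "qconv K F"
    unfolding qconv_def
  proof (intro ballI allI impI)
    fix z1 z2 c l s assume z: "z1 \<in> K" "z2 \<in> K" and g: "geodesic_between c l z1 z2" and s: "s \<in> {0..l}"
    show "F (c s) \<le> max (F z1) (F z2)"
    proof (rule field_le_epsilon)
      fix e :: real assume e: "0 < e"
      define r where "r = max (F z1) (F z2) + e"
      have "r \<in> S z1" "r \<in> S z2" using e by (auto intro!: F2 simp: r_def)
      then have "eventually (\<lambda>n. dist z1 (xs n) \<le> r \<and> dist z2 (xs n) \<le> r) sequentially"
        unfolding S_def by (simp add: eventually_conj)
      then have "eventually (\<lambda>n. dist (c s) (xs n) \<le> r) sequentially"
      proof (rule eventually_mono)
        fix n assume h: "dist z1 (xs n) \<le> r \<and> dist z2 (xs n) \<le> r"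
        have "dist (c s) (xs n) \<le> max (dist z1 (xs n)) (dist z2 (xs n))"
          by (rule busemann_point[OF Bu g s])
        then show "dist (c s) (xs n) \<le> r" using h by linarith
      qed
      then show "F (c s) \<le> max (F z1) (F z2) + e" using F1 unfolding S_def r_def by blast
    qed
  qed
  have FT: "F (T z) \<le> F z" if zB: "z \<in> B" for z
  proof -
    have ne: "S z \<noteq> {}" using Sne by blast
    have "S z \<subseteq> S (T z)"
    proof
      fix r assume "r \<in> S z"
      then obtain N where N: "\<forall>n\<ge>N. dist z (xs n) \<le> r" unfolding S_def eventually_sequentially by blast
      have "dist (T z) (xs n) \<le> r" if n: "n \<ge> Suc N" for n
      proof -
        define k where "k = n - 1"
        have k: "n = Suc k" "k \<ge> N" using n unfolding k_def by auto
        have "dist (T z) (xs n) = dist (T (xs k)) (T z)" using k xsS by (simp add: dist_commute)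
        also have "\<dots> \<le> dist (xs k) z" using RN xsA zB unfolding relatively_nonexpansive_def by blast
        also have "\<dots> \<le> r" using N k by (simp add: dist_commute)
        finally show ?thesis .
      qed
      then show "r \<in> S (T z)" unfolding S_def eventually_sequentially by blast
    qed
    then have "\<forall>r\<in>S z. F (T z) \<le> r" using F1 by blast
    then show ?thesis unfolding F_def[of z] using cInf_greatest[OF ne] by blast
  qed
  have "\<exists>y\<in>K. \<forall>w\<in>K. F y \<le> F w"
    by (rule min_exists[OF G U M Kne Kcl Kcv Kbd lip_cont[OF Flip] Fqc F0])
  then obtain y where y: "y \<in> K" "\<forall>w\<in>K. F y \<le> F w" by blast
  have Ty: "T y \<in> K" using TK y(1) by blast
  have eq: "F (T y) = F y" using FT[of y] y KB Ty by force
  show ?thesis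
  proof (rule bexI[OF _ y(1)], rule ccontr)
    assume neq: "T y \<noteq> y"
    define \<rho> where "\<rho> = F y"
    obtain q where q: "q \<in> K" "is_midpoint q y (T y)" using midpoint_exists[OF G Kcv y(1) Ty] by blast
    have Fq: "\<rho> \<le> F q" using y(2) q(1) unfolding \<rho>_def by blast
    show False
    proof (cases "\<rho> > 0")
      case True
      have epos: "dist y (T y) > 0" using neq by simp
      obtain \<eta> where eta: "\<eta> > 0" and H: "\<forall>a x z m :: 'a. dist x a \<le> \<rho> + \<eta> \<longrightarrow> dist z a \<le> \<rho> + \<eta> \<longrightarrow> is_midpoint m x z
            \<longrightarrow> dist m a \<ge> \<rho> - \<eta> \<longrightarrow> dist x z < dist y (T y)"
        using uc_key[OF U M True epos] by blast
      have "\<rho> + \<eta> \<in> S y" "\<rho> + \<eta> \<in> S (T y)" using eta eq unfolding \<rho>_def by (auto intro!: F2)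
      then have "eventually (\<lambda>n. dist y (xs n) \<le> \<rho> + \<eta> \<and> dist (T y) (xs n) \<le> \<rho> + \<eta>) sequentially"
        unfolding S_def by (simp add: eventually_conj)
      then obtain N where N: "\<forall>n\<ge>N. dist y (xs n) \<le> \<rho> + \<eta> \<and> dist (T y) (xs n) \<le> \<rho> + \<eta>"
        unfolding eventually_sequentially by blast
      have "\<rho> - \<eta> \<notin> S q"
      proof
        assume "\<rho> - \<eta> \<in> S q"
        then have "F q \<le> \<rho> - \<eta>" by (rule F1)
        then show False using Fq eta by linarith
      qed
      then obtain n where n: "n \<ge> N" "\<not> dist q (xs n) \<le> \<rho> - \<eta>"
        unfolding S_def eventually_sequentially by blast
      have d1: "dist y (xs n) \<le> \<rho> + \<eta>" and d2: "dist (T y) (xs n) \<le> \<rho> + \<eta>" using N n(1) by blast+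
      have d3: "\<rho> - \<eta> \<le> dist q (xs n)" using n(2) by simp
      have "dist y (T y) < dist y (T y)"
        using H[rule_format, OF d1 d2 q(2) d3] .
      then show False by simp
    next
      case False
      then have r0: "\<rho> = 0" using F0[of y] unfolding \<rho>_def by simp
      have "dist y (T y) \<le> 0"
      proof (rule field_le_epsilon)
        fix e :: real assume e: "0 < e"
        have "e/2 \<in> S y" "e/2 \<in> S (T y)" using e eq r0 unfolding \<rho>_def by (auto intro!: F2)
        then have "eventually (\<lambda>n. dist y (xs n) \<le> e/2 \<and> dist (T y) (xs n) \<le> e/2) sequentially"
          unfolding S_def by (simp add: eventually_conj)
        then obtain n where "dist y (xs n) \<le> e/2" "dist (T y) (xs n) \<le> e/2"
          using eventually_happens'[OF trivial_limit_sequentially] by blast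
        then show "dist y (T y) \<le> 0 + e" using dist_triangle[of y "T y" "xs n"] by (simp add: dist_commute)
      qed
      then show False using neq by simp
    qed
  qed
qed

theorem mainTheorem6:
  fixes A B :: "'a::complete_space set" and T :: "'a \<Rightarrow> 'a" and \<delta> :: "real \<Rightarrow> real \<Rightarrow> real"
  assumes "geodesic_space TYPE('a)"
    and "busemann_convex TYPE('a)"
    and "modulus_uc TYPE('a) \<delta>"
    and "monotone_modulus \<delta> \<or> lsc_right_modulus \<delta>"
    and "A \<noteq> {}" and "B \<noteq> {}"
    and "closed A" and "closed B"
    and "geo_convex A" and "geo_convex B"
    and "bounded B"
    and "noncyclic T A B"
    and "relatively_nonexpansive T A B"
  shows "\<exists>x\<in>A. \<exists>y\<in>B. T x = x \<and> T y = y \<and> dist x y = setdist A B"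
proof -
  note G = assms(1) and Bu = assms(2) and U = assms(3) and M = assms(4)
    and Ane = assms(5) and Bne = assms(6) and Acl = assms(7) and Bcl = assms(8)
    and Acv = assms(9) and Bcv = assms(10) and Bbd = assms(11) and RN = assms(13)
  have TA: "\<forall>x\<in>A. T x \<in> A" and TB: "\<forall>z\<in>B. T z \<in> B"
    using assms(12) unfolding noncyclic_def by blast+
  define g where "g y = setdist {y} A" for y
  have glip: "\<bar>g x - g y\<bar> \<le> dist x y" for x y unfolding g_def by (rule setdist_Lipschitz)
  have gcont: "continuous_on S g" for S by (rule lip_cont[OF glip])
  have gqc: "qconv B g" unfolding g_def by (rule setdist_qconv[OF G Bu Ane Acv])
  have "\<exists>y\<in>B. \<forall>w\<in>B. g y \<le> g w"
    by (rule min_exists[OF G U M Bne Bcl Bcv Bbd gcont gqc, of 0]) (simp add: g_def)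
  then obtain y0 where y0: "y0 \<in> B" "\<forall>w\<in>B. g y0 \<le> g w" by blast
  define m where "m = g y0"
  have mD: "m = setdist A B"
  proof (rule order_antisym)
    show "m \<le> setdist A B"
    proof (rule le_setdistI[OF Ane Bne])
      fix a b assume a: "a \<in> A" and b: "b \<in> B"
      have "m \<le> g b" using y0 b unfolding m_def by blast
      also have "g b \<le> dist b a" unfolding g_def using a by (simp add: setdist_le_dist)
      finally show "m \<le> dist a b" by (simp add: dist_commute)
    qed
    have "setdist B A \<le> setdist {y0} A" using y0(1) by (rule setdist_le_sing)
    then show "setdist A B \<le> m" unfolding m_def g_def by (simp add: setdist_sym)
  qed
  define B0 where "B0 = {y\<in>B. g y \<le> m}"
  have B0ne: "B0 \<noteq> {}" using y0(1) unfolding B0_def m_def by auto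
  have B0cl: "closed B0" unfolding B0_def
    by (rule continuous_on_closed_Collect_le[OF gcont continuous_on_const Bcl])
  have B0cv: "geo_convex B0" unfolding B0_def by (rule qconv_sublevel[OF Bcv gqc])
  have B0B: "B0 \<subseteq> B" unfolding B0_def by blast
  have B0bd: "bounded B0" using bounded_subset[OF Bbd B0B] .
  have TB0: "\<forall>z\<in>B0. T z \<in> B0"
  proof
    fix z assume z: "z \<in> B0"
    then have zB: "z \<in> B" and gz: "g z \<le> m" unfolding B0_def by auto
    have "g (T z) \<le> g z"
    proof (rule field_le_epsilon)
      fix e :: real assume e: "0 < e"
      have "setdist {z} A < g z + e" using e unfolding g_def by simp
      then obtain u a where "u \<in> {z}" "a \<in> A" "dist u a < g z + e"
        using setdist_ltE[of "{z}" A] Ane by blast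
      then have a: "a \<in> A" "dist z a < g z + e" by auto
      have "g (T z) \<le> dist (T z) (T a)" unfolding g_def using TA a(1) by (simp add: setdist_le_dist)
      also have "\<dots> = dist (T a) (T z)" by (simp add: dist_commute)
      also have "\<dots> \<le> dist a z" using RN a(1) zB unfolding relatively_nonexpansive_def by blast
      finally show "g (T z) \<le> g z + e" using a(2) by (simp add: dist_commute)
    qed
    then show "T z \<in> B0" using TB zB gz unfolding B0_def by auto
  qed
  obtain ys where ys: "ys \<in> B0" "T ys = ys"
    using asym_fixed[OF G Bu U M B0ne B0cl B0cv B0bd TB0 B0B Bbd Ane TA TB RN] by blast
  have ysB: "ys \<in> B" using ys(1) B0B by blast
  have gys: "g ys = m" using ys(1) y0(2) ysB unfolding B0_def m_def by force
  obtain xs where xs: "xs \<in> A" "\<forall>a\<in>A. dist xs ys \<le> dist a ys"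
    using nearest_exists[OF G Bu U M Ane Acl Acv] by blast
  have dxs: "dist xs ys = m"
  proof (rule order_antisym)
    show "dist xs ys \<le> m"
    proof (rule field_le_epsilon)
      fix e :: real assume e: "0 < e"
      have "setdist {ys} A < m + e" using e gys unfolding g_def by simp
      then obtain u a where "u \<in> {ys}" "a \<in> A" "dist u a < m + e"
        using setdist_ltE[of "{ys}" A] Ane by blast
      then show "dist xs ys \<le> m + e" using xs(2) by (force simp: dist_commute)
    qed
    have "g ys \<le> dist ys xs" unfolding g_def using xs(1) by (simp add: setdist_le_dist)
    then show "m \<le> dist xs ys" using gys by (simp add: dist_commute)
  qed
  have mn: "\<forall>a\<in>A. m \<le> dist a ys" using xs(2) dxs by simp
  have Txs: "T xs \<in> A" using TA xs(1) by blast
  have "dist (T xs) ys = dist (T xs) (T ys)" using ys(2) by simp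
  also have "\<dots> \<le> dist xs ys" using RN xs(1) ysB unfolding relatively_nonexpansive_def by blast
  finally have dT: "dist (T xs) ys \<le> m" using dxs by simp
  have "T xs = xs"
    by (rule nearest_unique[OF G U Acv Txs xs(1) mn dT]) (simp add: dxs)
  then show ?thesis using xs(1) ysB ys(2) dxs mD by blast
qed

end
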